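(* Let $\xi>0$ and $\alpha\in\mathbb{R}$, and consider the planar vector field $f_0(y,z;\alpha)$ on $\mathbb{R}^2$ given by \[ \dot y = e^{z}-1,\qquad \dot z = \xi + e^{z}\left(\alpha z - \xi y - \xi\right). \] Then $f_0$ has a unique fixed point, namely $(y,z)=(0,0)$, and this fixed point undergoes a degenerate Hopf bifurcation at $\alpha=\xi$. In particular, for $\alpha=\xi$ the vector field is Hamiltonian (up to a positive factor) and can be written as \[ f_0(y,z;\xi)=g(y,z)\,J\,\nabla H(y,z), \] where \[ g(y,z)=\frac{e^{\xi y+z}}{\xi},\qquad H(y,z)=-e^{-\xi y}\left(\xi y-\xi z+\xi+1-\xi e^{-z}\right)+1,\qquad J=\begin{bmatrix}0&1\\-1&0\end{bmatrix}. \]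
   Context: This planar system is the reduced (slow) problem, restricted to the critical manifold $C_0=\{z=-x-\xi y\}$, of the dimensionless spring-block earthquake model $\dot x=-e^{z}(x+(1+\alpha)z)$, $\dot y=e^{z}-1$, $\varepsilon\dot z=-e^{-z}(y+(x+z)/\xi)$ with $\varepsilon=0$. *)

theory Defs
  imports "HOL-Analysis.Analysis"
begin

definition f0 :: "real \<Rightarrow> real \<Rightarrow> real \<times> real \<Rightarrow> real \<times> real" where
  "f0 \<xi> \<alpha> p = (case p of (y, z) \<Rightarrow>
      (exp z - 1, \<xi> + exp z * (\<alpha> * z - \<xi> * y - \<xi>)))"

definition gfac :: "real \<Rightarrow> real \<times> real \<Rightarrow> real" where
  "gfac \<xi> p = (case p of (y, z) \<Rightarrow> exp (\<xi> * y + z) / \<xi>)"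

definition Ham :: "real \<Rightarrow> real \<times> real \<Rightarrow> real" where
  "Ham \<xi> p = (case p of (y, z) \<Rightarrow>
      - exp (- \<xi> * y) * (\<xi> * y - \<xi> * z + \<xi> + 1 - \<xi> * exp (- z)) + 1)"

definition Jsym :: "real \<times> real \<Rightarrow> real \<times> real" where
  "Jsym v = (case v of (a, b) \<Rightarrow> (b, - a))"

definition jac0 :: "real \<Rightarrow> real \<Rightarrow> real \<times> real \<Rightarrow> real \<times> real" where
  "jac0 \<xi> \<alpha> = frechet_derivative (f0 \<xi> \<alpha>) (at (0, 0))"

text \<open>Complex eigenvalues of a linear map L on R^2 (eigenvalues of its matrix
  [[a11,a12],[a21,a22]] with a11 = fst (L(1,0)), a12 = fst (L(0,1)), etc.,
  considered over the complex numbers).\<close>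
definition cx_eigenvalue :: "(real \<times> real \<Rightarrow> real \<times> real) \<Rightarrow> complex \<Rightarrow> bool" where
  "cx_eigenvalue L c \<longleftrightarrow>
     (\<exists>a b :: complex. (a, b) \<noteq> (0, 0) \<and>
        of_real (fst (L (1, 0))) * a + of_real (fst (L (0, 1))) * b = c * a \<and>
        of_real (snd (L (1, 0))) * a + of_real (snd (L (0, 1))) * b = c * b)"

end

theory Submission
  imports Defs
begin


lemma exp_strict: fixes t::real assumes "t \<noteq> 0" shows "1 + t < exp t"
proof (cases "1 + t/2 \<ge> 0")
  case True
  have "(1 + t/2)^2 \<le> exp (t/2) ^2"
    using power_mono[OF exp_ge_add_one_self[of "t/2"] True, of 2] by (simp add: add.commute)
  also have "exp (t/2)^2 = exp t" by (simp add: power2_eq_square flip: exp_add)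
  finally have "(1 + t/2)^2 \<le> exp t" .
  moreover have "0 < t*t" using assms by (auto simp: zero_less_mult_iff linorder_neq_iff)
  then have "1 + t < (1+t/2)^2" by (simp add: power2_eq_square field_simps)
  ultimately show ?thesis by linarith
next
  case False
  then have "1 + t < 0" by linarith
  then show ?thesis using exp_gt_zero[of t] by linarith
qed

lemma f0eq: "f0 \<xi> \<alpha> =
  (\<lambda>p. (exp (snd p) - 1, \<xi> + exp (snd p) * (\<alpha> * snd p - \<xi> * fst p - \<xi>)))"
  by (auto simp: fun_eq_iff f0_def)

lemma jd: "((\<lambda>p. (exp (snd p) - 1, \<xi> + exp (snd p) * (\<alpha> * snd p - \<xi> * fst p - (\<xi>::real)))) has_derivative
   (\<lambda>h. (snd h, - \<xi> * fst h + (\<alpha> - \<xi>) * snd h))) (at (0,0))"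
  apply (rule derivative_eq_intros refl)+
  apply (auto simp: fun_eq_iff algebra_simps)
  done

lemma hameq: "Ham \<xi> = (\<lambda>p. - exp (- \<xi> * fst p) * (\<xi> * fst p - \<xi> * snd p + \<xi> + 1 - \<xi> * exp (- snd p)) + 1)"
  by (auto simp: fun_eq_iff Ham_def)

lemma hd: "((\<lambda>p. - exp (- \<xi> * fst p) * (\<xi> * fst p - \<xi> * snd p + \<xi> + 1 - \<xi> * exp (- snd p)) + 1) has_derivative
   (\<lambda>h. h \<bullet> (\<xi> * exp (-\<xi> * fst p) * (\<xi> * fst p - \<xi> * snd p + \<xi> - \<xi> * exp (- snd p)),
              \<xi> * exp (-\<xi> * fst p) * (1 - exp (- snd p))))) (at p)"
  apply (rule derivative_eq_intros refl)+
  apply (auto simp: fun_eq_iff algebra_simps inner_prod_def)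
  done

lemma eig: "cx_eigenvalue (\<lambda>h. (snd h, -\<xi> * fst h + t * snd h)) c \<longleftrightarrow> c*c - of_real t * c + of_real \<xi> = 0"
proof
  assume "cx_eigenvalue (\<lambda>h. (snd h, -\<xi> * fst h + t * snd h)) c"
  then obtain a b :: complex where ab: "(a,b) \<noteq> (0,0)" "b = c*a" "- of_real \<xi> * a + of_real t * b = c * b"
    by (auto simp: cx_eigenvalue_def)
  then have "a \<noteq> 0" by auto
  have "a * (c*c - of_real t * c + of_real \<xi>) = 0" using ab(2,3) by (simp add: algebra_simps)
  then show "c*c - of_real t * c + of_real \<xi> = 0" using \<open>a \<noteq> 0\<close> by simp
next
  assume h: "c*c - of_real t * c + of_real \<xi> = 0"
  show "cx_eigenvalue (\<lambda>h. (snd h, -\<xi> * fst h + t * snd h)) c"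
    unfolding cx_eigenvalue_def
    apply (rule exI[of _ 1], rule exI[of _ c])
    using h by (simp add: algebra_simps eq_neg_iff_add_eq_0)
qed

lemma roots: fixes t \<xi> :: real assumes "t^2 < 4*\<xi>"
  shows "{c. c*c - of_real t * c + of_real \<xi> = 0} = {Complex (t/2) (sqrt (\<xi> - t^2/4)), Complex (t/2) (- sqrt (\<xi> - t^2/4))}"
proof -
  define w where "w = sqrt (\<xi> - t^2/4)"
  have w2: "w*w = \<xi> - t^2/4" unfolding w_def using assms by (simp add: real_sqrt_mult[symmetric])
  have "\<And>c. c*c - of_real t * c + of_real \<xi> = (c - Complex (t/2) w) * (c - Complex (t/2) (-w))"
    by (simp add: complex_eq_iff algebra_simps w2 power2_eq_square)
  then show ?thesis unfolding w_def[symmetric] by auto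
qed

lemma ham_pos: fixes \<xi> y z :: real assumes "\<xi> > 0" "(y,z) \<noteq> (0,0)" shows "Ham \<xi> (y,z) > 0"
proof -
  have eq: "Ham \<xi> (y,z) = exp (-\<xi>*y) * ((exp (\<xi>*y) - (1 + \<xi>*y)) + \<xi> * (exp (-z) - (1 + -z)))"
    by (simp add: Ham_def algebra_simps flip: exp_add)
  have a: "exp (\<xi>*y) - (1 + \<xi>*y) \<ge> 0" using exp_ge_add_one_self[of "\<xi>*y"] by (simp add: add.commute)
  have b: "exp (-z) - (1 + -z) \<ge> 0" using exp_ge_add_one_self[of "-z"] by (simp add: add.commute)
  have "exp (\<xi>*y) - (1 + \<xi>*y) > 0 \<or> exp (-z) - (1 + -z) > 0"
  proof (cases "y = 0")
    case True then have "z \<noteq> 0" using assms by auto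
    then show ?thesis using exp_strict[of "-z"] by simp
  next
    case False then have "\<xi>*y \<noteq> 0" using assms by simp
    then show ?thesis using exp_strict[of "\<xi>*y"] by simp
  qed
  then have "(exp (\<xi>*y) - (1 + \<xi>*y)) + \<xi> * (exp (-z) - (1 + -z)) > 0"
    using a b assms by (smt (verit) mult_pos_pos mult_nonneg_nonneg)
  then show ?thesis unfolding eq by simp
qed

theorem proposition1:
  fixes \<xi> :: real
  assumes "\<xi> > 0"
  shows
    \<comment> \<open>unique fixed point (0,0), for every alpha\<close>
    "(\<forall>\<alpha>. {p. f0 \<xi> \<alpha> p = (0, 0)} = {(0, 0)})
     \<comment> \<open>Hopf bifurcation at alpha = xi: f0 differentiable at the origin,
        a complex pair of eigenvalues mu(alpha) +- i omega(alpha) of the Jacobian,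
        crossing the imaginary axis at alpha = xi with nonzero speed\<close>
     \<and> (\<forall>\<alpha>. f0 \<xi> \<alpha> differentiable (at (0, 0)))
     \<and> (\<exists>\<delta> > 0. \<exists>\<mu> \<omega> :: real \<Rightarrow> real. \<exists>d.
          (\<mu> has_real_derivative d) (at \<xi>) \<and> d \<noteq> 0 \<and> \<mu> \<xi> = 0 \<and>
          (\<forall>\<alpha>. \<bar>\<alpha> - \<xi>\<bar> < \<delta> \<longrightarrow> \<omega> \<alpha> > 0 \<and>
             {c. cx_eigenvalue (jac0 \<xi> \<alpha>) c} =
               {Complex (\<mu> \<alpha>) (\<omega> \<alpha>), Complex (\<mu> \<alpha>) (- \<omega> \<alpha>)}))
     \<comment> \<open>degeneracy: at alpha = xi the field is Hamiltonian up to the positive factor g\<close>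
     \<and> (\<forall>p. gfac \<xi> p > 0)
     \<and> (\<forall>p. \<exists>D. GDERIV (Ham \<xi>) p :> D \<and> f0 \<xi> \<xi> p = gfac \<xi> p *\<^sub>R Jsym D)
     \<comment> \<open>and the origin is a nonlinear centre: H has a strict local minimum there\<close>
     \<and> (\<exists>\<epsilon> > 0. \<forall>p. p \<noteq> (0, 0) \<and> norm p < \<epsilon> \<longrightarrow> Ham \<xi> p > Ham \<xi> (0, 0))"
  proof -
  have A: "\<forall>\<alpha>. {p. f0 \<xi> \<alpha> p = (0, 0)} = {(0, 0)}"
  proof (intro allI set_eqI iffI)
    fix \<alpha> p assume "p \<in> {p. f0 \<xi> \<alpha> p = (0, 0)}"
    then obtain y z where p: "p = (y,z)" and h: "exp z - 1 = 0" "\<xi> + exp z * (\<alpha> * z - \<xi> * y - \<xi>) = 0"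
      by (cases p) (auto simp: f0_def)
    then have "z = 0" by simp
    with h assms have "y = 0" by simp
    then show "p \<in> {(0,0)}" using p \<open>z = 0\<close> by simp
  qed (auto simp: f0_def)
  have B: "\<forall>\<alpha>. f0 \<xi> \<alpha> differentiable (at (0, 0))"
    using jd unfolding f0eq differentiable_def by blast
  have J: "jac0 \<xi> \<alpha> = (\<lambda>h. (snd h, - \<xi> * fst h + (\<alpha> - \<xi>) * snd h))" for \<alpha>
    unfolding jac0_def f0eq using frechet_derivative_at[OF jd] by simp
  have C: "\<exists>\<delta> > 0. \<exists>\<mu> \<omega> :: real \<Rightarrow> real. \<exists>d.
          (\<mu> has_real_derivative d) (at \<xi>) \<and> d \<noteq> 0 \<and> \<mu> \<xi> = 0 \<and>
          (\<forall>\<alpha>. \<bar>\<alpha> - \<xi>\<bar> < \<delta> \<longrightarrow> \<omega> \<alpha> > 0 \<and>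
             {c. cx_eigenvalue (jac0 \<xi> \<alpha>) c} =
               {Complex (\<mu> \<alpha>) (\<omega> \<alpha>), Complex (\<mu> \<alpha>) (- \<omega> \<alpha>)})"
  proof (intro exI conjI allI impI)
    show "sqrt \<xi> > 0" using assms by simp
    show "((\<lambda>\<alpha>. (\<alpha> - \<xi>)/2) has_real_derivative 1/2) (at \<xi>)"
      by (auto intro!: derivative_eq_intros)
    show "(1/2::real) \<noteq> 0" by simp
    show "(\<xi> - \<xi>)/2 = 0" by simp
    fix \<alpha> assume "\<bar>\<alpha> - \<xi>\<bar> < sqrt \<xi>"
    then have "(\<alpha> - \<xi>)^2 < (sqrt \<xi>)^2"
      using power_strict_mono[of "\<bar>\<alpha> - \<xi>\<bar>" "sqrt \<xi>" 2] by simp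
    then have lt: "(\<alpha> - \<xi>)^2 < \<xi>" using assms by simp
    then show "sqrt (\<xi> - (\<alpha> - \<xi>)^2/4) > 0" using assms by simp
    have "(\<alpha> - \<xi>)^2 < 4*\<xi>" using lt assms by linarith
    from roots[OF this]
    show "{c. cx_eigenvalue (jac0 \<xi> \<alpha>) c} =
          {Complex ((\<alpha> - \<xi>)/2) (sqrt (\<xi> - (\<alpha> - \<xi>)^2/4)), Complex ((\<alpha> - \<xi>)/2) (- sqrt (\<xi> - (\<alpha> - \<xi>)^2/4))}"
      unfolding J eig .
  qed
  have D: "\<forall>p. gfac \<xi> p > 0" using assms by (auto simp: gfac_def)
  have E: "\<forall>p. \<exists>D. GDERIV (Ham \<xi>) p :> D \<and> f0 \<xi> \<xi> p = gfac \<xi> p *\<^sub>R Jsym D"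
  proof
    fix p :: "real \<times> real"
    obtain y z where p: "p = (y,z)" by (cases p)
    have e1: "exp (\<xi> * y + z) * exp (- (\<xi> * y)) = exp z"
      by (simp flip: exp_add)
    have e2: "exp z * exp (-z) = 1" by (simp flip: exp_add)
    show "\<exists>D. GDERIV (Ham \<xi>) p :> D \<and> f0 \<xi> \<xi> p = gfac \<xi> p *\<^sub>R Jsym D"
      apply (rule exI, rule conjI)
       apply (unfold gderiv_def hameq, rule hd)
      using assms e1 e2 unfolding p
      apply (simp add: f0_def gfac_def Jsym_def algebra_simps)
      done
  qed
  have F: "\<exists>\<epsilon> > 0. \<forall>p. p \<noteq> (0, 0) \<and> norm p < \<epsilon> \<longrightarrow> Ham \<xi> p > Ham \<xi> (0, 0)"
  proof (intro exI[of _ 1] conjI allI impI)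
    fix p :: "real \<times> real" assume "p \<noteq> (0, 0) \<and> norm p < 1"
    then show "Ham \<xi> p > Ham \<xi> (0, 0)" using ham_pos[OF assms, of "fst p" "snd p"]
      by (simp add: Ham_def)
  qed simp
  show ?thesis using A B C D E F by blast
qed

end
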